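(* Let a trained classification model have feature space $\Phi\subseteq\mathbb{R}^f$ and produce logits $z=Wx_\phi+b$ for a feature vector $x_\phi\in\Phi$, where $W\in\mathbb{R}^{n\times f}$, $b\in\mathbb{R}^n$, $n$ the number of classes. Let $x$ be an input whose feature vector $x_\phi$ has distance at least $\delta$ from the closest decision boundary in $\Phi$. Then $$\max\mathrm{softmax}(Wx_\phi+b)\;\ge\;\frac{e^{\delta\rho(W)}}{e^{\delta\rho(W)}+(n-1)},\qquad \rho(W)=\min_{i\ne j,\ i,j\in\{1,\dots,n\}}\|W[j]-W[i]\|_2.$$
   Context: $W[k]$ denotes the $k$-th row of $W$. The classification of an input is the index of its largest logit. The decision boundary between classes $i$ and $j$ is the set of $y\in\Phi$ with $W[i]y+b[i]=W[j]y+b[j]\ge W[k]y+b[k]$ for all $k\notin\{i,j\}$; the distance to the closest decision boundary is the Euclidean distance from $x_\phi$ to the union of the decision boundaries between the class of $x$ and the other classes. $\mathrm{softmax}(z)[k]=e^{z[k]}/\sum_{l}e^{z[l]}$.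
   Formalization: The feature space $\Phi$ is all of $\mathbb{R}^f$, so the distance hypothesis concerns the decision boundaries in all of $\mathbb{R}^f$ rather than only their points in a subset $\Phi$. The statement above fails without it. *)

theory Defs
  imports "HOL-Analysis.Analysis"
begin

text \<open>Linear classification head: n classes (index type 'n), feature dimension f
  (index type 'f).  Row k of W is W $ k; the logits at feature vector y are W y + b.\<close>

definition logits :: "real^'f^'n \<Rightarrow> real^'n \<Rightarrow> real^'f \<Rightarrow> real^'n" where
  "logits W b y = W *v y + b"

text \<open>Decision boundary between classes i and j (feature space = all of R^f).\<close>
definition decision_boundary :: "real^'f^'n \<Rightarrow> real^'n \<Rightarrow> 'n \<Rightarrow> 'n \<Rightarrow> (real^'f) set" where
  "decision_boundary W b i j =
     {y. (W $ i) \<bullet> y + b $ i = (W $ j) \<bullet> y + b $ j \<and>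
         (\<forall>k. k \<noteq> i \<and> k \<noteq> j \<longrightarrow> (W $ k) \<bullet> y + b $ k \<le> (W $ i) \<bullet> y + b $ i)}"

definition softmax :: "real^'n \<Rightarrow> real^'n" where
  "softmax z = (\<chi> k. exp (z $ k) / (\<Sum>l\<in>UNIV. exp (z $ l)))"

definition rho :: "real^'f^'n \<Rightarrow> real" where
  "rho W = Min {norm (W $ j - W $ i) | i j. i \<noteq> j}"

end

theory Submission
  imports Defs
begin

lemma logit_comp: "logits W b y $ k = (W $ k) \<bullet> y + b $ k"
  by (simp add: logits_def matrix_vector_mul_component)

lemma key:
  fixes W :: "real^'f^'n" and b :: "real^'n" and x :: "real^'f" and c :: 'n and \<delta> :: real
  assumes max: "\<forall>k. logits W b x $ k \<le> logits W b x $ c"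
    and bd: "\<forall>j. j \<noteq> c \<longrightarrow> (\<forall>y \<in> decision_boundary W b c j. \<delta> \<le> dist x y)"
  shows "\<delta> * norm (W $ j - W $ c) \<le> logits W b x $ c - logits W b x $ j"
proof -
  define z where "z = logits W b x"
  define S where "S = {k. W $ k \<noteq> W $ c}"
  define f where "f k = (z $ c - z $ k) / norm (W $ k - W $ c)" for k
  have zk: "z $ k \<le> z $ c" for k using max z_def by auto
  show ?thesis
  proof (cases "j \<in> S")
    case False
    then show ?thesis using zk[of j] by (simp add: S_def z_def)
  next
    case True
    have fin: "finite S" by simp
    obtain j0 where j0: "j0 \<in> S" "\<And>k. k \<in> S \<Longrightarrow> f j0 \<le> f k"
    proof -
      have "Min (f ` S) \<in> f ` S" using fin True by (intro Min_in) auto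
      then obtain j0 where "j0 \<in> S" "f j0 = Min (f ` S)" by auto
      moreover have "\<And>k. k \<in> S \<Longrightarrow> Min (f ` S) \<le> f k" using fin by simp
      ultimately show ?thesis using that by metis
    qed
    define d where "d = f j0"
    define n0 where "n0 = norm (W $ j0 - W $ c)"
    have n0p: "n0 > 0" using j0(1) by (simp add: S_def n0_def)
    have dge: "d \<ge> 0" unfolding d_def f_def using zk[of j0] by simp
    define u where "u = (1 / n0) *\<^sub>R (W $ j0 - W $ c)"
    have nu: "norm u = 1" using n0p by (simp add: u_def n0_def)
    define y where "y = x + d *\<^sub>R u"
    have lin: "logits W b y $ k - logits W b y $ c = (z $ k - z $ c) + d * ((W $ k - W $ c) \<bullet> u)" for k
      by (simp add: logit_comp z_def y_def inner_add_right inner_diff_left algebra_simps)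
    have uu: "(W $ j0 - W $ c) \<bullet> u = n0"
      using n0p by (simp add: u_def n0_def power2_norm_eq_inner[symmetric] power2_eq_square)
    have eq0: "logits W b y $ j0 = logits W b y $ c"
    proof -
      have "z $ c - z $ j0 = d * n0" using n0p by (simp add: d_def f_def n0_def)
      then show ?thesis using lin[of j0] uu by simp
    qed
    have le: "logits W b y $ k \<le> logits W b y $ c" for k
    proof (cases "k \<in> S")
      case False
      then show ?thesis using lin[of k] zk[of k] by (simp add: S_def)
    next
      case True
      define nk where "nk = norm (W $ k - W $ c)"
      have nkp: "nk > 0" using True by (simp add: S_def nk_def)
      have cs: "(W $ k - W $ c) \<bullet> u \<le> nk"
        using norm_cauchy_schwarz[of "W $ k - W $ c" u] nu by (simp add: nk_def)
      have "d \<le> f k" using j0(2)[OF True] d_def by simp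
      hence "d * nk \<le> z $ c - z $ k" using nkp by (simp add: f_def nk_def pos_le_divide_eq)
      moreover have "d * ((W $ k - W $ c) \<bullet> u) \<le> d * nk" using cs dge by (simp add: mult_left_mono)
      ultimately show ?thesis using lin[of k] by linarith
    qed
    have ymem: "y \<in> decision_boundary W b c j0"
      using eq0 le by (auto simp: decision_boundary_def logit_comp)
    have j0c: "j0 \<noteq> c" using j0(1) by (auto simp: S_def)
    have "\<delta> \<le> dist x y" using bd j0c ymem by blast
    also have "dist x y = d" using nu dge by (simp add: y_def dist_norm)
    finally have dd: "\<delta> \<le> d" .
    define nj where "nj = norm (W $ j - W $ c)"
    have njp: "nj > 0" using True by (simp add: S_def nj_def)
    have "d \<le> f j" using j0(2)[OF True] d_def by simp
    hence "\<delta> \<le> f j" using dd by simp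
    hence "\<delta> * nj \<le> z $ c - z $ j" using njp by (simp add: f_def nj_def pos_le_divide_eq)
    then show ?thesis by (simp add: nj_def z_def)
  qed
qed

theorem corollary1:
  fixes W :: "real^'f^'n" and b :: "real^'n" and x :: "real^'f" and c :: 'n and \<delta> :: real
  assumes "CARD('n) \<ge> 2"
    and "\<forall>k. logits W b x $ k \<le> logits W b x $ c"
    and "\<forall>j. j \<noteq> c \<longrightarrow> (\<forall>y \<in> decision_boundary W b c j. \<delta> \<le> dist x y)"
  shows "Max (range (\<lambda>k. softmax (logits W b x) $ k))
           \<ge> exp (\<delta> * rho W) / (exp (\<delta> * rho W) + (real CARD('n) - 1))"
proof -
  define z where "z = logits W b x"
  define R where "R = {norm (W $ j - W $ i) | i j. i \<noteq> j}"
  have Rfin: "finite R"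
  proof -
    have "R \<subseteq> (\<lambda>(i,j). norm (W $ j - W $ i)) ` UNIV" by (auto simp: R_def)
    then show ?thesis by (rule finite_subset) simp
  qed
  obtain j1 :: 'n where "j1 \<noteq> c"
  proof -
    have "\<not> (UNIV :: 'n set) \<subseteq> {c}"
    proof
      assume "(UNIV :: 'n set) \<subseteq> {c}"
      hence "CARD('n) \<le> card {c}" by (intro card_mono) auto
      thus False using assms(1) by simp
    qed
    thus ?thesis using that by blast
  qed
  hence Rne: "R \<noteq> {}" by (auto simp: R_def)
  have rho0: "rho W \<ge> 0"
    unfolding rho_def R_def[symmetric] by (subst Min_ge_iff[OF Rfin Rne]) (auto simp: R_def)
  have gap: "\<delta> * rho W \<le> z $ c - z $ j" if "j \<noteq> c" for j
  proof (cases "\<delta> \<le> 0")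
    case True
    then have "\<delta> * rho W \<le> 0" using rho0 by (simp add: mult_nonpos_nonneg)
    moreover have "z $ j \<le> z $ c" using assms(2) z_def by blast
    ultimately show ?thesis by linarith
  next
    case False
    have mem: "norm (W $ j - W $ c) \<in> R" unfolding R_def using that by blast
    have "rho W \<le> norm (W $ j - W $ c)"
      unfolding rho_def R_def[symmetric] using Min_le[OF Rfin mem] .
    hence "\<delta> * rho W \<le> \<delta> * norm (W $ j - W $ c)" using False by simp
    also have "\<dots> \<le> z $ c - z $ j" using key[OF assms(2,3)] z_def by simp
    finally show ?thesis .
  qed
  define a where "a = \<delta> * rho W"
  define E where "E = exp a"
  define n where "n = real CARD('n)"
  have Ep: "E > 0" by (simp add: E_def)
  have sumsplit: "(\<Sum>l\<in>UNIV. exp (z $ l)) = exp (z $ c) + (\<Sum>l\<in>UNIV - {c}. exp (z $ l))"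
    by (simp add: sum.remove)
  have bnd: "(\<Sum>l\<in>UNIV - {c}. exp (z $ l)) \<le> (\<Sum>l\<in>UNIV - {c}. exp (z $ c) / E)"
  proof (rule sum_mono)
    fix l assume "l \<in> UNIV - {c}"
    hence "z $ l \<le> z $ c - a" using gap[of l] a_def by auto
    hence "exp (z $ l) \<le> exp (z $ c - a)" by simp
    thus "exp (z $ l) \<le> exp (z $ c) / E" by (simp add: exp_diff E_def)
  qed
  have cardm: "real (card (UNIV - {c} :: 'n set)) = n - 1"
    by (simp add: n_def card_Diff_singleton of_nat_diff)
  define s where "s = (\<Sum>l\<in>UNIV. exp (z $ l))"
  have spos: "s > 0" unfolding s_def by (intro sum_pos) auto
  have sle: "s \<le> exp (z $ c) * (E + (n - 1)) / E"
  proof -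
    have "s \<le> exp (z $ c) + (n - 1) * (exp (z $ c) / E)"
      using sumsplit bnd cardm by (simp add: s_def)
    also have "\<dots> = exp (z $ c) * (E + (n - 1)) / E" using Ep by (simp add: field_simps)
    finally show ?thesis .
  qed
  have n1: "n - 1 \<ge> 0" using assms(1) by (simp add: n_def)
  have "E / (E + (n - 1)) \<le> exp (z $ c) / s"
  proof -
    have "s * E \<le> exp (z $ c) * (E + (n - 1))" using sle Ep by (simp add: pos_le_divide_eq)
    moreover have "E + (n - 1) > 0" using Ep n1 by linarith
    ultimately show ?thesis using spos by (simp add: frac_le_eq divide_le_eq le_divide_eq mult.commute[of E])

  qed
  also have "\<dots> = softmax z $ c" by (simp add: softmax_def s_def)
  also have "\<dots> \<le> Max (range (\<lambda>k. softmax z $ k))" by (rule Max_ge) auto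
  finally show ?thesis by (simp add: E_def a_def n_def z_def)
qed

end
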